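(* Let $t \ge 1$ and $b \ge 0$ be integers, $T$ a finite non-empty subset of $\mathbb{Z}^b$, and $f : \mathbb{Z}^b \to \mathbb{Z}$ a function. Then there is a function $g : \mathbb{Z}^b \to \{0,\dots,t-1\}$ such that for each $x \in \mathbb{Z}^b$, $\sum_{y\in T} g(x-y) \equiv f(x) \pmod t$.
   Context: $\mathbb{Z}^0$ is the trivial group. *)

theory Defs
  imports Main "HOL-Number_Theory.Cong"
begin

text \<open>The lattice Z^b, represented as integer sequences vanishing from index b on
  (coordinates 0..b-1).\<close>
definition Zvec :: "nat \<Rightarrow> (nat \<Rightarrow> int) set" where
  "Zvec b = {x. \<forall>i\<ge>b. x i = 0}"

end

theory Submission
  imports Defs
begin

definition solb :: "nat \<Rightarrow> int \<Rightarrow> (nat \<Rightarrow> int) set \<Rightarrow> ((nat \<Rightarrow> int) \<Rightarrow> int) \<Rightarrow> ((nat \<Rightarrow> int) \<Rightarrow> int)" where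
  "solb b t S h = (SOME g. \<forall>x\<in>Zvec b. [(\<Sum>y\<in>S. g (x - y)) = h x] (mod t))"

definition lo :: "nat \<Rightarrow> (nat \<Rightarrow> int) set \<Rightarrow> int" where
  "lo b T = Min ((\<lambda>y. y b) ` T)"
definition hi :: "nat \<Rightarrow> (nat \<Rightarrow> int) set \<Rightarrow> int" where
  "hi b T = Max ((\<lambda>y. y b) ` T)"

definition Up where
  "Up b t T f (n::nat) G = solb b t ((\<lambda>y. y(b:=0)) ` {y\<in>T. y b = lo b T})
     (\<lambda>x'. f (x'(b := hi b T + int n)) - (\<Sum>y\<in>{y\<in>T. y b \<noteq> lo b T}. G (x'(b := hi b T + int n) - y)))"

definition Dn where
  "Dn b t T f (n::nat) G = solb b t ((\<lambda>y. y(b:=0)) ` {y\<in>T. y b = hi b T})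
     (\<lambda>x'. f (x'(b := hi b T - 1 - int n)) - (\<Sum>y\<in>{y\<in>T. y b \<noteq> hi b T}. G (x'(b := hi b T - 1 - int n) - y)))"

primrec Gs :: "nat \<Rightarrow> int \<Rightarrow> (nat \<Rightarrow> int) set \<Rightarrow> ((nat \<Rightarrow> int) \<Rightarrow> int) \<Rightarrow> nat \<Rightarrow> ((nat \<Rightarrow> int) \<Rightarrow> int)" where
  "Gs b t T f 0 = (\<lambda>z. 0)"
| "Gs b t T f (Suc n) = (\<lambda>z. if z b = hi b T - lo b T + int n then Up b t T f n (Gs b t T f n) (z(b:=0))
      else if z b = -1 - int n then Dn b t T f n (Gs b t T f n) (z(b:=0)) else Gs b t T f n z)"

lemma Gs_stable:
  assumes "n \<le> n'" "- int n \<le> z b" "z b < hi b T - lo b T + int n"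
  shows "Gs b t T f n' z = Gs b t T f n z"
  using assms(1)
proof (induction n' rule: dec_induct)
  case base then show ?case by simp
next
  case (step k)
  then show ?case using assms(2,3) by auto
qed

definition gfin where
  "gfin b t T f z = Gs b t T f (nat \<bar>z b\<bar> + 1) z"

lemma gfin_eq:
  assumes "lo b T \<le> hi b T" "- int n \<le> z b" "z b < hi b T - lo b T + int n"
  shows "gfin b t T f z = Gs b t T f n z"
proof -
  let ?N = "nat \<bar>z b\<bar> + 1"
  have "Gs b t T f (max ?N n) z = Gs b t T f n z"
    by (rule Gs_stable) (use assms in auto)
  moreover have "Gs b t T f (max ?N n) z = Gs b t T f ?N z"
    by (rule Gs_stable) (use assms in auto)
  ultimately show ?thesis unfolding gfin_def by simp
qed

lemma solb_spec:
  assumes "\<exists>g. \<forall>x\<in>Zvec b. [(\<Sum>y\<in>S. g (x - y)) = h x] (mod t)"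
  shows "\<forall>x\<in>Zvec b. [(\<Sum>y\<in>S. solb b t S h (x - y)) = h x] (mod t)"
  unfolding solb_def using someI_ex[OF assms] .

lemma upd_sub: "(x - y)(b:=0) = x(b:=0) - y(b:=(0::int))"
  by (auto simp: fun_eq_iff)

lemma step:
  fixes t :: int
  assumes IH: "\<And>S h. finite S \<Longrightarrow> S \<noteq> {} \<Longrightarrow> S \<subseteq> Zvec b \<Longrightarrow>
      \<exists>g. \<forall>x\<in>Zvec b. [(\<Sum>y\<in>S. g (x - y)) = h x] (mod t)"
    and fin: "finite T" and ne: "T \<noteq> {}" and sub: "T \<subseteq> Zvec (Suc b)"
  shows "\<exists>g. \<forall>x\<in>Zvec (Suc b). [(\<Sum>y\<in>T. g (x - y)) = f x] (mod t)"
proof -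
  define L where "L = lo b T"
  define H where "H = hi b T"
  have finI: "finite ((\<lambda>y. y b) ` T)" using fin by simp
  have neI: "(\<lambda>y. y b) ` T \<noteq> {}" using ne by simp
  have Lle: "\<And>y. y \<in> T \<Longrightarrow> L \<le> y b" unfolding L_def lo_def using finI by auto
  have Hge: "\<And>y. y \<in> T \<Longrightarrow> y b \<le> H" unfolding H_def hi_def using finI by auto
  have LH: "L \<le> H" using ne Lle Hge by fastforce
  have Lin: "\<exists>y\<in>T. y b = L" unfolding L_def lo_def using Min_in[OF finI neI] by auto
  have Hin: "\<exists>y\<in>T. y b = H" unfolding H_def hi_def using Max_in[OF finI neI] by auto
  have subZ: "\<And>y. y \<in> T \<Longrightarrow> y(b:=0) \<in> Zvec b"
    using sub unfolding Zvec_def by auto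
  have inj: "\<And>c. inj_on (\<lambda>y. y(b:=(0::int))) {y\<in>T. y b = c}"
    unfolding inj_on_def by (auto simp: fun_eq_iff) (metis fun_upd_apply)
  have specU: "\<And>h. \<forall>x\<in>Zvec b. [(\<Sum>y\<in>(\<lambda>y. y(b:=0)) ` {y\<in>T. y b = L}.
       solb b t ((\<lambda>y. y(b:=0)) ` {y\<in>T. y b = L}) h (x - y)) = h x] (mod t)"
    by (rule solb_spec, rule IH) (use fin Lin subZ in auto)
  have specD: "\<And>h. \<forall>x\<in>Zvec b. [(\<Sum>y\<in>(\<lambda>y. y(b:=0)) ` {y\<in>T. y b = H}.
       solb b t ((\<lambda>y. y(b:=0)) ` {y\<in>T. y b = H}) h (x - y)) = h x] (mod t)"
    by (rule solb_spec, rule IH) (use fin Hin subZ in auto)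
  let ?g = "gfin b t T f"
  have LH': "lo b T \<le> hi b T" using LH L_def H_def by simp
  show ?thesis
  proof (intro exI ballI)
    fix x assume xZ: "x \<in> Zvec (Suc b)"
    define x' where "x' = x(b:=0)"
    have x'Z: "x' \<in> Zvec b" using xZ unfolding x'_def Zvec_def by auto
    have xrec: "\<And>c. c = x b \<Longrightarrow> x'(b := c) = x" unfolding x'_def by auto
    show "[(\<Sum>y\<in>T. ?g (x - y)) = f x] (mod t)"
    proof (cases "H \<le> x b")
      case True
      define n where "n = nat (x b - H)"
      have k: "x b = H + int n" using True n_def by simp
      define A where "A = {y\<in>T. y b = L}"
      define B where "B = {y\<in>T. y b \<noteq> L}"
      have TAB: "T = A \<union> B" "A \<inter> B = {}" "finite A" "finite B"
        unfolding A_def B_def using fin by auto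
      have sumT: "(\<Sum>y\<in>T. ?g (x - y)) = (\<Sum>y\<in>A. ?g (x - y)) + (\<Sum>y\<in>B. ?g (x - y))"
        using TAB by (simp add: sum.union_disjoint)
      have gA: "?g (x - y) = Up b t T f n (Gs b t T f n) (x' - y(b:=0))" if "y \<in> A" for y
      proof -
        have yb: "y b = L" using that A_def by simp
        have "?g (x - y) = Gs b t T f (Suc n) (x - y)"
          by (rule gfin_eq) (use LH' yb k L_def H_def LH in auto)
        also have "\<dots> = Up b t T f n (Gs b t T f n) (x' - y(b:=0))"
          using yb k L_def H_def by (simp add: upd_sub x'_def)
        finally show ?thesis .
      qed
      have gB: "?g (x - y) = Gs b t T f n (x'(b := hi b T + int n) - y)" if "y \<in> B" for y
      proof -
        have yb: "L < y b" "y b \<le> H" using that B_def Lle Hge by force+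
        have "?g (x - y) = Gs b t T f n (x - y)"
          by (rule gfin_eq) (use LH' yb k L_def H_def in auto)
        then show ?thesis using xrec k H_def by simp
      qed
      have sA: "(\<Sum>y\<in>A. ?g (x - y)) = (\<Sum>y\<in>(\<lambda>y. y(b:=0)) ` A. Up b t T f n (Gs b t T f n) (x' - y))"
        using gA by (simp add: sum.reindex[OF inj[of L, folded A_def]])
      have sB: "(\<Sum>y\<in>B. ?g (x - y)) = (\<Sum>y\<in>B. Gs b t T f n (x'(b := hi b T + int n) - y))"
        by (rule sum.cong) (auto simp: gB)
      have xe: "x'(b := hi b T + int n) = x" using xrec k H_def by simp
      have cU: "[(\<Sum>y\<in>A. ?g (x - y)) = f x - (\<Sum>y\<in>B. ?g (x - y))] (mod t)"
        unfolding sA sB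
        using specU[rule_format, OF x'Z, of "\<lambda>x'. f (x'(b := hi b T + int n)) - (\<Sum>y\<in>B. Gs b t T f n (x'(b := hi b T + int n) - y))"]
        unfolding Up_def A_def B_def L_def H_def xe by simp
      then show ?thesis unfolding sumT
        using cong_add[OF cU cong_refl[of "\<Sum>y\<in>B. ?g (x - y)"]] by simp
    next
      case False
      define n where "n = nat (H - 1 - x b)"
      have k: "x b = H - 1 - int n" using False n_def by simp
      define A where "A = {y\<in>T. y b = H}"
      define B where "B = {y\<in>T. y b \<noteq> H}"
      have TAB: "T = A \<union> B" "A \<inter> B = {}" "finite A" "finite B"
        unfolding A_def B_def using fin by auto
      have sumT: "(\<Sum>y\<in>T. ?g (x - y)) = (\<Sum>y\<in>A. ?g (x - y)) + (\<Sum>y\<in>B. ?g (x - y))"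
        using TAB by (simp add: sum.union_disjoint)
      have gA: "?g (x - y) = Dn b t T f n (Gs b t T f n) (x' - y(b:=0))" if "y \<in> A" for y
      proof -
        have yb: "y b = H" using that A_def by simp
        have "?g (x - y) = Gs b t T f (Suc n) (x - y)"
          by (rule gfin_eq) (use LH' yb k L_def H_def LH in auto)
        also have "\<dots> = Dn b t T f n (Gs b t T f n) (x' - y(b:=0))"
          using yb k L_def H_def LH by (simp add: upd_sub x'_def)
        finally show ?thesis .
      qed
      have gB: "?g (x - y) = Gs b t T f n (x'(b := hi b T - 1 - int n) - y)" if "y \<in> B" for y
      proof -
        have yb: "L \<le> y b" "y b < H" using that B_def Lle Hge by force+
        have "?g (x - y) = Gs b t T f n (x - y)"
          by (rule gfin_eq) (use LH' yb k L_def H_def in auto)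
        then show ?thesis using xrec k H_def by simp
      qed
      have sA: "(\<Sum>y\<in>A. ?g (x - y)) = (\<Sum>y\<in>(\<lambda>y. y(b:=0)) ` A. Dn b t T f n (Gs b t T f n) (x' - y))"
        using gA by (simp add: sum.reindex[OF inj[of H, folded A_def]])
      have sB: "(\<Sum>y\<in>B. ?g (x - y)) = (\<Sum>y\<in>B. Gs b t T f n (x'(b := hi b T - 1 - int n) - y))"
        by (rule sum.cong) (auto simp: gB)
      have xe: "x'(b := hi b T - 1 - int n) = x" using xrec k H_def by simp
      have cU: "[(\<Sum>y\<in>A. ?g (x - y)) = f x - (\<Sum>y\<in>B. ?g (x - y))] (mod t)"
        unfolding sA sB
        using specD[rule_format, OF x'Z, of "\<lambda>x'. f (x'(b := hi b T - 1 - int n)) - (\<Sum>y\<in>B. Gs b t T f n (x'(b := hi b T - 1 - int n) - y))"]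
        unfolding Dn_def A_def B_def L_def H_def xe by simp
      then show ?thesis unfolding sumT
        using cong_add[OF cU cong_refl[of "\<Sum>y\<in>B. ?g (x - y)"]] by simp
    qed
  qed
qed

lemma main:
  fixes t :: int
  shows "finite T \<Longrightarrow> T \<noteq> {} \<Longrightarrow> T \<subseteq> Zvec b \<Longrightarrow>
     \<exists>g. \<forall>x\<in>Zvec b. [(\<Sum>y\<in>T. g (x - y)) = f x] (mod t)"
proof (induction b arbitrary: T f)
  case 0
  have "T \<subseteq> {(\<lambda>_. 0)}" using 0 unfolding Zvec_def by (auto simp: fun_eq_iff)
  then have "T = {(\<lambda>_. 0)}" using 0 by blast
  then show ?case by (intro exI[of _ f]) auto
next
  case (Suc b)
  show ?case by (rule step[OF Suc.IH]) (use Suc.prems in auto)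
qed

theorem proposition14:
  fixes t :: int and b :: nat and T :: "(nat \<Rightarrow> int) set"
    and f :: "(nat \<Rightarrow> int) \<Rightarrow> int"
  assumes "t \<ge> 1" and "finite T" and "T \<noteq> {}" and "T \<subseteq> Zvec b"
  shows "\<exists>g :: (nat \<Rightarrow> int) \<Rightarrow> int.
           (\<forall>x\<in>Zvec b. g x \<in> {0..<t}) \<and>
           (\<forall>x\<in>Zvec b. [(\<Sum>y\<in>T. g (x - y)) = f x] (mod t))"
proof -
  obtain g where g: "\<forall>x\<in>Zvec b. [(\<Sum>y\<in>T. g (x - y)) = f x] (mod t)"
    using main[OF assms(2-4)] by blast
  show ?thesis
  proof (intro exI[of _ "\<lambda>z. g z mod t"] conjI ballI)
    fix x show "g x mod t \<in> {0..<t}" using assms(1) by auto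
  next
    fix x assume "x \<in> Zvec b"
    have "[(\<Sum>y\<in>T. g (x - y) mod t) = (\<Sum>y\<in>T. g (x - y))] (mod t)"
      by (rule cong_sum) (simp add: cong_def)
    then show "[(\<Sum>y\<in>T. g (x - y) mod t) = f x] (mod t)"
      using g \<open>x \<in> Zvec b\<close> cong_trans by blast
  qed
qed

end
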